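(* Let $(X,\varphi)$ be an irreducible Smale space, $\mathcal R_1$ a Markov partition with $\max_{R\in\mathcal R_1}\operatorname{diam}R\le\varepsilon_X''$, and $\mathcal R_n=\{R\in\bigvee_{i=1-n}^{n-1}\varphi^{-i}(\mathcal R_1):\operatorname{int}R\ne\varnothing\}$. There exist constants $C,c>0$ such that for every $\varepsilon\in(0,1)$ there is $n_0\in\mathbb N$ with $$ce^{2(\operatorname{h}(\varphi)-\varepsilon)n}<\#\mathcal R_n<Ce^{2(\operatorname{h}(\varphi)+\varepsilon)n}\quad\text{for all }n\ge n_0,$$ where $\operatorname{h}(\varphi)$ is the topological entropy of $\varphi$.
   Context: A Smale space $(X,\varphi)$: compact metric space $(X,d)$, homeomorphism $\varphi$, constants $\varepsilon_X>0,\lambda_X>1$ and a continuous bracket $[\cdot,\cdot]$ on $\{(x,y):d(x,y)\le\varepsilon_X\}$ with $[x,x]=x$, $[x,[y,z]]=[x,z]$, $[[x,y],z]=[x,z]$, $\varphi([x,y])=[\varphi(x),\varphi(y)]$ (whenever defined), such that $\varphi$ contracts distances by $\lambda_X^{-1}$ on local stable sets $X^s(x,\varepsilon)=\{y:d(x,y)<\varepsilon,[x,y]=y\}$ and $\varphi^{-1}$ contracts by $\lambda_X^{-1}$ on local unstable sets $X^u(x,\varepsilon)=\{y:d(x,y)<\varepsilon,[y,x]=y\}$. Irreducible: for nonempty open $U,V$ some $n\in\mathbb N$ has $\varphi^n(U)\cap V\ne\varnothing$. Fix $\varepsilon_X'\in(0,\varepsilon_X/2]$ with $d(x,y)\le\varepsilon_X'\Rightarrow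 d(x,[x,y]),d(y,[x,y])<\varepsilon_X/2$, and $\varepsilon_X''\in(0,\varepsilon_X'/12)$ with $d(x,y)\le\varepsilon_X''\Rightarrow d(\varphi^i x,\varphi^i y)\le\varepsilon_X'/2$ ($|i|\le2$) and $d([x,y],x),d([x,y],y)\le\varepsilon_X'/4$. Rectangle: nonempty $R$, $\operatorname{diam}R\le\varepsilon_X'$, $[x,y]\in R$ for $x,y\in R$; $X^{s}(x,R)=X^{s}(x,2\varepsilon_X')\cap R$, $X^{u}(x,R)=X^{u}(x,2\varepsilon_X')\cap R$; proper: closed with $R=\operatorname{cl}\operatorname{int}R$. Markov partition: finite cover by nonempty proper rectangles with pairwise disjoint interiors such that $\varphi(X^u(x,R_i))\supset X^u(\varphi x,R_j)$ and $\varphi(X^s(x,R_i))\subset X^s(\varphi x,R_j)$ whenever $x\in\operatorname{int}R_i\cap\varphi^{-1}(\operatorname{int}R_j)$. $\mathcal U\vee\mathcal W=\{U\cap W\}$. *)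

theory Defs
  imports "HOL-Analysis.Analysis"
begin

text \<open>Smale spaces are modelled on a type: the compact metric space X is the
  whole universe of a metric-space type 'a (so X is nonempty).\<close>

definition zpow :: "('a \<Rightarrow> 'a) \<Rightarrow> int \<Rightarrow> 'a \<Rightarrow> 'a" where
  "zpow f i = (if 0 \<le> i then f ^^ nat i else (inv f) ^^ nat (- i))"

definition Xs :: "('a::metric_space \<Rightarrow> 'a \<Rightarrow> 'a) \<Rightarrow> 'a \<Rightarrow> real \<Rightarrow> 'a set" where
  "Xs br x e = {y. dist x y < e \<and> br x y = y}"

definition Xu :: "('a::metric_space \<Rightarrow> 'a \<Rightarrow> 'a) \<Rightarrow> 'a \<Rightarrow> real \<Rightarrow> 'a set" where
  "Xu br x e = {y. dist x y < e \<and> br y x = y}"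

text \<open>Smale space (X = UNIV, phi, bracket br, constants eX, lamX). The bracket is a total
  function, but all axioms only concern pairs with dist x y \<le> eX (its domain).\<close>
definition smale_space ::
  "('a::metric_space \<Rightarrow> 'a) \<Rightarrow> ('a \<Rightarrow> 'a \<Rightarrow> 'a) \<Rightarrow> real \<Rightarrow> real \<Rightarrow> bool" where
  "smale_space phi br eX lamX \<longleftrightarrow>
     compact (UNIV :: 'a set) \<and>
     bij phi \<and> continuous_on UNIV phi \<and> continuous_on UNIV (inv phi) \<and>
     eX > 0 \<and> lamX > 1 \<and>
     continuous_on {p. dist (fst p) (snd p) \<le> eX} (\<lambda>p. br (fst p) (snd p)) \<and>
     (\<forall>x. br x x = x) \<and>
     (\<forall>x y z. dist y z \<le> eX \<and> dist x (br y z) \<le> eX \<and> dist x z \<le> eX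
        \<longrightarrow> br x (br y z) = br x z) \<and>
     (\<forall>x y z. dist x y \<le> eX \<and> dist (br x y) z \<le> eX \<and> dist x z \<le> eX
        \<longrightarrow> br (br x y) z = br x z) \<and>
     (\<forall>x y. dist x y \<le> eX \<and> dist (phi x) (phi y) \<le> eX
        \<longrightarrow> phi (br x y) = br (phi x) (phi y)) \<and>
     (\<forall>x y z. y \<in> Xs br x eX \<and> z \<in> Xs br x eX
        \<longrightarrow> dist (phi y) (phi z) \<le> dist y z / lamX) \<and>
     (\<forall>x y z. y \<in> Xu br x eX \<and> z \<in> Xu br x eX
        \<longrightarrow> dist (inv phi y) (inv phi z) \<le> dist y z / lamX)"

definition irreducible_sys :: "('a::topological_space \<Rightarrow> 'a) \<Rightarrow> bool" where
  "irreducible_sys phi \<longleftrightarrow>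
     (\<forall>U V. open U \<and> open V \<and> U \<noteq> {} \<and> V \<noteq> {} \<longrightarrow> (\<exists>n::nat. (phi ^^ n) ` U \<inter> V \<noteq> {}))"

text \<open>The constants eX' and eX'' fixed in the context.\<close>
definition eps1_ok :: "('a::metric_space \<Rightarrow> 'a \<Rightarrow> 'a) \<Rightarrow> real \<Rightarrow> real \<Rightarrow> bool" where
  "eps1_ok br eX e1 \<longleftrightarrow> 0 < e1 \<and> e1 \<le> eX / 2 \<and>
     (\<forall>x y. dist x y \<le> e1 \<longrightarrow> dist x (br x y) < eX / 2 \<and> dist y (br x y) < eX / 2)"

definition eps2_ok :: "('a::metric_space \<Rightarrow> 'a) \<Rightarrow> ('a \<Rightarrow> 'a \<Rightarrow> 'a) \<Rightarrow> real \<Rightarrow> real \<Rightarrow> bool" where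
  "eps2_ok phi br e1 e2 \<longleftrightarrow> 0 < e2 \<and> e2 < e1 / 12 \<and>
     (\<forall>x y. dist x y \<le> e2 \<longrightarrow>
        (\<forall>i::int. \<bar>i\<bar> \<le> 2 \<longrightarrow> dist (zpow phi i x) (zpow phi i y) \<le> e1 / 2) \<and>
        dist (br x y) x \<le> e1 / 4 \<and> dist (br x y) y \<le> e1 / 4)"

definition rectangle :: "('a::metric_space \<Rightarrow> 'a \<Rightarrow> 'a) \<Rightarrow> real \<Rightarrow> 'a set \<Rightarrow> bool" where
  "rectangle br e1 R \<longleftrightarrow> R \<noteq> {} \<and> diameter R \<le> e1 \<and> (\<forall>x\<in>R. \<forall>y\<in>R. br x y \<in> R)"

definition XsR :: "('a::metric_space \<Rightarrow> 'a \<Rightarrow> 'a) \<Rightarrow> real \<Rightarrow> 'a \<Rightarrow> 'a set \<Rightarrow> 'a set" where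
  "XsR br e1 x R = Xs br x (2 * e1) \<inter> R"

definition XuR :: "('a::metric_space \<Rightarrow> 'a \<Rightarrow> 'a) \<Rightarrow> real \<Rightarrow> 'a \<Rightarrow> 'a set \<Rightarrow> 'a set" where
  "XuR br e1 x R = Xu br x (2 * e1) \<inter> R"

definition proper_rectangle :: "('a::metric_space \<Rightarrow> 'a \<Rightarrow> 'a) \<Rightarrow> real \<Rightarrow> 'a set \<Rightarrow> bool" where
  "proper_rectangle br e1 R \<longleftrightarrow> rectangle br e1 R \<and> closed R \<and> R = closure (interior R)"

definition markov_partition ::
  "('a::metric_space \<Rightarrow> 'a) \<Rightarrow> ('a \<Rightarrow> 'a \<Rightarrow> 'a) \<Rightarrow> real \<Rightarrow> 'a set set \<Rightarrow> bool" where
  "markov_partition phi br e1 P \<longleftrightarrow>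
     finite P \<and> (\<forall>R\<in>P. proper_rectangle br e1 R) \<and> \<Union>P = UNIV \<and>
     (\<forall>R\<in>P. \<forall>R'\<in>P. R \<noteq> R' \<longrightarrow> interior R \<inter> interior R' = {}) \<and>
     (\<forall>Ri\<in>P. \<forall>Rj\<in>P. \<forall>x. x \<in> interior Ri \<and> phi x \<in> interior Rj \<longrightarrow>
        XuR br e1 (phi x) Rj \<subseteq> phi ` XuR br e1 x Ri \<and>
        phi ` XsR br e1 x Ri \<subseteq> XsR br e1 (phi x) Rj)"

definition refined_partition :: "('a::topological_space \<Rightarrow> 'a) \<Rightarrow> 'a set set \<Rightarrow> nat \<Rightarrow> 'a set set" where
  "refined_partition phi P n =
     {R. (\<exists>f. (\<forall>i\<in>{1 - int n .. int n - 1}. f i \<in> P) \<and>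
              R = (\<Inter>i\<in>{1 - int n .. int n - 1}. zpow phi (- i) ` f i))
         \<and> interior R \<noteq> {}}"

definition separated_set :: "('a::metric_space \<Rightarrow> 'a) \<Rightarrow> nat \<Rightarrow> real \<Rightarrow> 'a set \<Rightarrow> bool" where
  "separated_set phi n e S \<longleftrightarrow>
     (\<forall>x\<in>S. \<forall>y\<in>S. x \<noteq> y \<longrightarrow> (\<exists>i<n. dist ((phi ^^ i) x) ((phi ^^ i) y) > e))"

definition max_separated :: "('a::metric_space \<Rightarrow> 'a) \<Rightarrow> nat \<Rightarrow> real \<Rightarrow> nat" where
  "max_separated phi n e = Sup {card S | S. finite S \<and> separated_set phi n e S}"

definition topological_entropy :: "('a::metric_space \<Rightarrow> 'a) \<Rightarrow> ereal" where
  "topological_entropy phi =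
     (SUP e\<in>{0<..}. limsup (\<lambda>n. ereal (ln (real (max_separated phi n e)) / real n)))"

end

theory Submission
  imports Defs
begin

locale SM =
  fixes phi :: "'a::metric_space \<Rightarrow> 'a" and br :: "'a \<Rightarrow> 'a \<Rightarrow> 'a"
    and eX lamX e1 e2 :: real and R1 :: "'a set set"
  assumes sm: "smale_space phi br eX lamX"
    and e1ok: "eps1_ok br eX e1"
    and e2ok: "eps2_ok phi br e1 e2"
    and mp: "markov_partition phi br e1 R1"
    and dm: "\<forall>R\<in>R1. diameter R \<le> e2"
begin

lemma cpt: "compact (UNIV::'a set)" using sm by (simp add: smale_space_def)
lemma bij: "bij phi" using sm by (simp add: smale_space_def)
lemma cont: "continuous_on UNIV phi" using sm by (simp add: smale_space_def)
lemma cont_inv: "continuous_on UNIV (inv phi)" using sm by (simp add: smale_space_def)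
lemma eX: "eX > 0" using sm by (simp add: smale_space_def)
lemma lam: "lamX > 1" using sm by (simp add: smale_space_def)
lemma br_cont: "continuous_on {p. dist (fst p) (snd p) \<le> eX} (\<lambda>p. br (fst p) (snd p))"
  using sm by (simp add: smale_space_def)
lemma br_refl[simp]: "br x x = x" using sm by (simp add: smale_space_def)
lemma ax1: "dist y z \<le> eX \<Longrightarrow> dist x (br y z) \<le> eX \<Longrightarrow> dist x z \<le> eX \<Longrightarrow> br x (br y z) = br x z"
  using sm by (simp add: smale_space_def)
lemma ax2: "dist x y \<le> eX \<Longrightarrow> dist (br x y) z \<le> eX \<Longrightarrow> dist x z \<le> eX \<Longrightarrow> br (br x y) z = br x z"
  using sm by (simp add: smale_space_def)
lemma ax_eq: "dist x y \<le> eX \<Longrightarrow> dist (phi x) (phi y) \<le> eX \<Longrightarrow> phi (br x y) = br (phi x) (phi y)"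
  using sm by (simp add: smale_space_def)
lemma ax_s: "y \<in> Xs br x eX \<Longrightarrow> z \<in> Xs br x eX \<Longrightarrow> dist (phi y) (phi z) \<le> dist y z / lamX"
proof -
  have "\<forall>x y z. y \<in> Xs br x eX \<and> z \<in> Xs br x eX
        \<longrightarrow> dist (phi y) (phi z) \<le> dist y z / lamX" using sm unfolding smale_space_def by (elim conjE) assumption
  then show "y \<in> Xs br x eX \<Longrightarrow> z \<in> Xs br x eX \<Longrightarrow> ?thesis" by blast
qed
lemma ax_u: "y \<in> Xu br x eX \<Longrightarrow> z \<in> Xu br x eX \<Longrightarrow> dist (inv phi y) (inv phi z) \<le> dist y z / lamX"
proof -
  have "\<forall>x y z. y \<in> Xu br x eX \<and> z \<in> Xu br x eX
        \<longrightarrow> dist (inv phi y) (inv phi z) \<le> dist y z / lamX" using sm unfolding smale_space_def by (elim conjE) assumption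
  then show "y \<in> Xu br x eX \<Longrightarrow> z \<in> Xu br x eX \<Longrightarrow> ?thesis" by blast
qed

lemma e1: "0 < e1" "e1 \<le> eX / 2" using e1ok by (auto simp: eps1_ok_def)
lemma e1d: "dist x y \<le> e1 \<Longrightarrow> dist x (br x y) < eX / 2 \<and> dist y (br x y) < eX / 2"
  using e1ok by (auto simp: eps1_ok_def)
lemma e2: "0 < e2" "e2 < e1 / 12" using e2ok by (auto simp: eps2_ok_def)
lemma e2d: "dist x y \<le> e2 \<Longrightarrow> dist (br x y) x \<le> e1 / 4 \<and> dist (br x y) y \<le> e1 / 4"
  using e2ok by (auto simp: eps2_ok_def)

lemma fin: "finite R1" using mp by (simp add: markov_partition_def)
lemma cover: "\<Union>R1 = UNIV" using mp by (simp add: markov_partition_def)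
lemma disj: "R \<in> R1 \<Longrightarrow> R' \<in> R1 \<Longrightarrow> R \<noteq> R' \<Longrightarrow> interior R \<inter> interior R' = {}"
  using mp by (simp add: markov_partition_def)
lemma prop_rect: "R \<in> R1 \<Longrightarrow> proper_rectangle br e1 R"
  using mp by (simp add: markov_partition_def)
lemma closedR: "R \<in> R1 \<Longrightarrow> closed R" using prop_rect by (simp add: proper_rectangle_def)
lemma clint: "R \<in> R1 \<Longrightarrow> closure (interior R) = R" using prop_rect by (simp add: proper_rectangle_def)
lemma rect_br: "R \<in> R1 \<Longrightarrow> x \<in> R \<Longrightarrow> y \<in> R \<Longrightarrow> br x y \<in> R"
  using prop_rect by (simp add: proper_rectangle_def rectangle_def)
lemma nonemptyR: "R \<in> R1 \<Longrightarrow> R \<noteq> {}"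
  using prop_rect by (simp add: proper_rectangle_def rectangle_def)
lemma markov_s: "Ri \<in> R1 \<Longrightarrow> Rj \<in> R1 \<Longrightarrow> x \<in> interior Ri \<Longrightarrow> phi x \<in> interior Rj \<Longrightarrow>
   phi ` XsR br e1 x Ri \<subseteq> XsR br e1 (phi x) Rj"
proof -
  have "\<forall>Ri\<in>R1. \<forall>Rj\<in>R1. \<forall>x. x \<in> interior Ri \<and> phi x \<in> interior Rj \<longrightarrow>
        XuR br e1 (phi x) Rj \<subseteq> phi ` XuR br e1 x Ri \<and>
        phi ` XsR br e1 x Ri \<subseteq> XsR br e1 (phi x) Rj" using mp unfolding markov_partition_def by (elim conjE) assumption
  then show "Ri \<in> R1 \<Longrightarrow> Rj \<in> R1 \<Longrightarrow> x \<in> interior Ri \<Longrightarrow> phi x \<in> interior Rj \<Longrightarrow> ?thesis" by blast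
qed
lemma markov_u: "Ri \<in> R1 \<Longrightarrow> Rj \<in> R1 \<Longrightarrow> x \<in> interior Ri \<Longrightarrow> phi x \<in> interior Rj \<Longrightarrow>
   XuR br e1 (phi x) Rj \<subseteq> phi ` XuR br e1 x Ri"
proof -
  have "\<forall>Ri\<in>R1. \<forall>Rj\<in>R1. \<forall>x. x \<in> interior Ri \<and> phi x \<in> interior Rj \<longrightarrow>
        XuR br e1 (phi x) Rj \<subseteq> phi ` XuR br e1 x Ri \<and>
        phi ` XsR br e1 x Ri \<subseteq> XsR br e1 (phi x) Rj" using mp unfolding markov_partition_def by (elim conjE) assumption
  then show "Ri \<in> R1 \<Longrightarrow> Rj \<in> R1 \<Longrightarrow> x \<in> interior Ri \<Longrightarrow> phi x \<in> interior Rj \<Longrightarrow> ?thesis" by blast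
qed

lemma distR: assumes "R \<in> R1" "x \<in> R" "y \<in> R" shows "dist x y \<le> e2"
proof -
  have "bounded R" using cpt compact_imp_bounded bounded_subset by blast
  then have "dist x y \<le> diameter R" using assms diameter_bounded_bound by blast
  then show ?thesis using dm assms by force
qed

lemma int_disj: "R \<in> R1 \<Longrightarrow> R' \<in> R1 \<Longrightarrow> interior (R \<inter> R') \<noteq> {} \<Longrightarrow> R = R'"
  using disj interior_Int by blast

lemma inv_phi[simp]: "inv phi (phi x) = x" using bij by (simp add: bij_is_inj)
lemma phi_inv[simp]: "phi (inv phi x) = x" using bij by (simp add: bij_is_surj surj_f_inv_f)

abbreviation P where "P i \<equiv> phi ^^ i"
abbreviation Q where "Q i \<equiv> inv phi ^^ i"

lemma QP[simp]: "Q i (P i x) = x"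
proof (induction i arbitrary: x)
  case (Suc i)
  have "Q (Suc i) (P (Suc i) x) = Q i (inv phi (phi (P i x)))"
    by (metis funpow_Suc_right funpow.simps(2) o_apply)
  then show ?case using Suc by simp
qed simp
lemma PQ[simp]: "P i (Q i x) = x"
proof (induction i arbitrary: x)
  case (Suc i)
  have "P (Suc i) (Q (Suc i) x) = P i (phi (inv phi (Q i x)))"
    by (metis funpow_Suc_right funpow.simps(2) o_apply funpow_swap1)
  then show ?case using Suc by simp
qed simp

lemma contP: "continuous_on UNIV (P i)"
proof (induction i)
  case (Suc i) then show ?case using continuous_on_compose2[OF cont Suc] by simp
qed (simp add: continuous_on_id)
lemma contQ: "continuous_on UNIV (Q i)"
proof (induction i)
  case (Suc i) then show ?case using continuous_on_compose2[OF cont_inv Suc] by simp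
qed (simp add: continuous_on_id)

lemma P_image: "P i ` A = Q i -` A"
proof
  show "P i ` A \<subseteq> Q i -` A" proof
    fix y assume "y \<in> P i ` A"
    then obtain x where "x \<in> A" "y = P i x" by blast
    then show "y \<in> Q i -` A" by simp
  qed
  show "Q i -` A \<subseteq> P i ` A" proof
    fix y assume "y \<in> Q i -` A"
    then have "Q i y \<in> A" by simp
    then have "P i (Q i y) \<in> P i ` A" by (rule imageI)
    then show "y \<in> P i ` A" by simp
  qed
qed


lemma Q_image: "Q i ` A = P i -` A"
proof
  show "Q i ` A \<subseteq> P i -` A" proof
    fix y assume "y \<in> Q i ` A"
    then obtain x where "x \<in> A" "y = Q i x" by blast
    then show "y \<in> P i -` A" by simp
  qed
  show "P i -` A \<subseteq> Q i ` A" proof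
    fix y assume "y \<in> P i -` A"
    then have "P i y \<in> A" by simp
    then have "Q i (P i y) \<in> Q i ` A" by (rule imageI)
    then show "y \<in> Q i ` A" by simp
  qed
qed

lemma open_P: "open U \<Longrightarrow> open (P i ` U)"
  unfolding P_image using contQ[of i] continuous_on_open_vimage[of UNIV "Q i"] by simp
lemma open_Pv: "open U \<Longrightarrow> open (P i -` U)"
  using contP[of i] continuous_on_open_vimage[of UNIV "P i"] by simp
lemma open_Q: "open U \<Longrightarrow> open (Q i ` U)"
  unfolding Q_image by (rule open_Pv)
lemma closed_Pv: "closed C \<Longrightarrow> closed (P i -` C)"
  using open_Pv[of "- C" i] by (simp add: closed_def vimage_Compl)
lemma injP: "inj (P i)" by (metis QP injI)
lemma injQ: "inj (Q i)" by (metis PQ injI)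

lemma P_add: "P i (P j x) = P (i + j) x" by (simp add: funpow_add)
lemma inv_P_Suc[simp]: "inv phi (P (Suc j) x) = P j x" by simp
lemma phi_P: "phi (P j x) = P (Suc j) x" by simp

lemma e2_le: "e2 \<le> e1" "e2 \<le> eX" "e1 \<le> eX" using e1 e2 by auto

lemma br_orbit:
  assumes "\<forall>j\<le>i. dist (P j a) (P j b) \<le> e2"
  shows "P i (br a b) = br (P i a) (P i b)"
  using assms
proof (induction i)
  case (Suc i)
  then have h: "P i (br a b) = br (P i a) (P i b)" by simp
  have d1: "dist (P i a) (P i b) \<le> eX" using Suc.prems[rule_format, of i] e2_le by simp
  have d2: "dist (phi (P i a)) (phi (P i b)) \<le> eX" using Suc.prems[rule_format, of "Suc i"] e2_le by simp
  have "P (Suc i) (br a b) = phi (P i (br a b))" by simp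
  also have "\<dots> = br (P (Suc i) a) (P (Suc i) b)" using h ax_eq[OF d1 d2] by simp
  finally show ?case .
qed simp

lemma br_in_Xs:
  assumes "dist p q \<le> e2" shows "br p q \<in> Xs br p eX" "br p q \<in> Xu br q eX"
    "br p (br p q) = br p q" "br (br p q) q = br p q"
proof -
  have dpq: "dist p q \<le> e1" "dist p q \<le> eX" using assms e2_le by auto
  have d: "dist p (br p q) < eX / 2" "dist q (br p q) < eX / 2" using e1d[OF dpq(1)] by auto
  have d': "dist p (br p q) \<le> eX" "dist (br p q) q \<le> eX" using d eX by (auto simp: dist_commute)
  show i1: "br p (br p q) = br p q" using ax1[of p q p] dpq d' by simp
  show i2: "br (br p q) q = br p q" using ax2[of p q q] dpq d' by simp
  show "br p q \<in> Xs br p eX" using d i1 eX by (simp add: Xs_def)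
  show "br p q \<in> Xu br q eX" using d i2 eX by (simp add: Xu_def)
qed

lemma self_Xs: "p \<in> Xs br p eX" "p \<in> Xu br p eX" using eX by (auto simp: Xs_def Xu_def)

lemma stable_contr:
  assumes "\<forall>j\<le>N. dist (P j a) (P j b) \<le> e2"
  shows "\<forall>j\<le>N. dist (P j a) (P j (br a b)) \<le> dist a (br a b) / lamX ^ j"
proof (intro allI impI)
  fix j assume "j \<le> N"
  then show "dist (P j a) (P j (br a b)) \<le> dist a (br a b) / lamX ^ j"
  proof (induction j)
    case (Suc j)
    then have IH: "dist (P j a) (P j (br a b)) \<le> dist a (br a b) / lamX ^ j" by simp
    have o: "P j (br a b) = br (P j a) (P j b)" using br_orbit assms Suc.prems by simp
    have dj: "dist (P j a) (P j b) \<le> e2" using assms Suc.prems by simp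
    have "dist (phi (P j a)) (phi (P j (br a b))) \<le> dist (P j a) (P j (br a b)) / lamX"
      unfolding o by (rule ax_s[OF self_Xs(1) br_in_Xs(1)[OF dj]])
    also have "\<dots> \<le> dist a (br a b) / lamX ^ j / lamX"
      by (rule divide_right_mono[OF IH]) (use lam in simp)
    finally show ?case by (simp add: divide_divide_eq_left mult.commute)
  qed simp
qed

lemma unstable_contr:
  assumes "\<forall>j\<le>N. dist (P j a) (P j b) \<le> e2"
  shows "\<forall>d\<le>N. dist (P (N - d) (br a b)) (P (N - d) b) \<le> dist (P N (br a b)) (P N b) / lamX ^ d"
proof (intro allI impI)
  fix d assume "d \<le> N"
  then show "dist (P (N - d) (br a b)) (P (N - d) b) \<le> dist (P N (br a b)) (P N b) / lamX ^ d"
  proof (induction d)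
    case (Suc d)
    then have IH: "dist (P (N - d) (br a b)) (P (N - d) b) \<le> dist (P N (br a b)) (P N b) / lamX ^ d" by simp
    define j where "j = N - Suc d"
    have jd: "N - d = Suc j" using Suc.prems j_def by simp
    have "\<forall>j'\<le>Suc j. dist (P j' a) (P j' b) \<le> e2" using assms Suc.prems jd by auto
    then have o: "P (Suc j) (br a b) = br (P (Suc j) a) (P (Suc j) b)" by (rule br_orbit)
    have dj: "dist (P (Suc j) a) (P (Suc j) b) \<le> e2" using assms[rule_format, of "Suc j"] Suc.prems jd by linarith
    have "dist (inv phi (P (Suc j) (br a b))) (inv phi (P (Suc j) b)) \<le> dist (P (Suc j) (br a b)) (P (Suc j) b) / lamX"
      unfolding o by (rule ax_u[OF br_in_Xs(2)[OF dj] self_Xs(2)])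
    also have "\<dots> \<le> dist (P N (br a b)) (P N b) / lamX ^ d / lamX"
      using jd by (intro divide_right_mono) (use IH lam in auto)
    moreover have "N - Suc d = j" using j_def by simp
    ultimately show ?case using jd by (simp add: divide_divide_eq_left mult.commute)
  qed simp
qed

lemma shadow_bound:
  assumes "\<forall>j\<le>N. dist (P j a) (P j b) \<le> e2" "j \<le> N"
  shows "dist (P j a) (P j b) \<le> e1 / 4 / lamX ^ j + e1 / 4 / lamX ^ (N - j)"
proof -
  have dab: "dist a b \<le> e2" using assms(1) by force
  have dN: "dist (P N a) (P N b) \<le> e2" using assms(1) by force
  have z1: "dist a (br a b) \<le> e1 / 4" using e2d[OF dab] by (simp add: dist_commute)
  have z2: "dist (P N (br a b)) (P N b) \<le> e1 / 4" using e2d[OF dN] br_orbit[of N a b] assms(1) by simp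
  have lp: "lamX ^ j > 0" "lamX ^ (N - j) > 0" using lam by auto
  have "dist (P j a) (P j (br a b)) \<le> dist a (br a b) / lamX ^ j"
    using stable_contr[OF assms(1)] assms(2) by simp
  also have "\<dots> \<le> e1 / 4 / lamX ^ j" by (rule divide_right_mono[OF z1]) (use lp in simp)
  finally have A: "dist (P j a) (P j (br a b)) \<le> e1 / 4 / lamX ^ j" .
  have "dist (P j (br a b)) (P j b) \<le> dist (P N (br a b)) (P N b) / lamX ^ (N - j)"
    using unstable_contr[OF assms(1), rule_format, of "N - j"] assms(2) by simp
  also have "\<dots> \<le> e1 / 4 / lamX ^ (N - j)" by (rule divide_right_mono[OF z2]) (use lp in simp)
  finally have B: "dist (P j (br a b)) (P j b) \<le> e1 / 4 / lamX ^ (N - j)" .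
  show ?thesis using dist_triangle[of "P j a" "P j b" "P j (br a b)"] A B by linarith
qed

lemma shadow:
  assumes "e > 0"
  shows "\<exists>k. \<forall>x y m. (\<forall>j < m + 2 * k. dist (P j x) (P j y) \<le> e2) \<longrightarrow>
      (\<forall>j < m. dist (P (j + k) x) (P (j + k) y) \<le> e)"
proof -
  obtain k where k: "e1 / (2 * e) < lamX ^ k" using real_arch_pow[OF lam] by blast
  have lk: "lamX ^ k > 0" using lam by simp
  have kb: "e1 / 2 / lamX ^ k \<le> e" using k lk assms e1 by (simp add: field_simps)
  show ?thesis
  proof (intro exI allI impI)
    fix x y m j assume H: "\<forall>j < m + 2 * k. dist (P j x) (P j y) \<le> e2" and j: "j < m"
    define N where "N = m + 2 * k - 1"
    have H': "\<forall>i\<le>N. dist (P i x) (P i y) \<le> e2" using H j N_def by auto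
    have jN: "j + k \<le> N" using j N_def by simp
    have b: "dist (P (j + k) x) (P (j + k) y) \<le> e1 / 4 / lamX ^ (j + k) + e1 / 4 / lamX ^ (N - (j + k))"
      by (rule shadow_bound[OF H' jN])
    have p1: "lamX ^ k \<le> lamX ^ (j + k)" using lam by (simp add: power_increasing)
    have p2: "lamX ^ k \<le> lamX ^ (N - (j + k))" using lam j N_def by (intro power_increasing) auto
    have "e1 / 4 / lamX ^ (j + k) \<le> e1 / 4 / lamX ^ k"
      using p1 lk e1 by (intro divide_left_mono) auto
    moreover have "e1 / 4 / lamX ^ (N - (j + k)) \<le> e1 / 4 / lamX ^ k"
      using p2 lk e1 by (intro divide_left_mono) auto
    moreover have "e1 / 4 / lamX ^ k + e1 / 4 / lamX ^ k = e1 / 2 / lamX ^ k" by simp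
    ultimately show "dist (P (j + k) x) (P (j + k) y) \<le> e" using b kb by linarith
  qed
qed


definition mw :: "nat \<Rightarrow> (nat \<Rightarrow> 'a set) \<Rightarrow> 'a set" where
  "mw m w = {x. \<forall>i<m. P i x \<in> w i}"

definition words :: "nat \<Rightarrow> (nat \<Rightarrow> 'a set) set" where
  "words m = {w. \<forall>i<m. w i \<in> R1}"

definition Alls :: "nat \<Rightarrow> 'a set set" where
  "Alls m = mw m ` words m"

definition Gs :: "nat \<Rightarrow> 'a set set" where
  "Gs m = {M \<in> Alls m. interior M \<noteq> {}}"

lemma mw_restrict: "mw m (restrict w {..<m}) = mw m w"
  by (simp add: mw_def)

lemma Alls_PiE: "Alls m = mw m ` (PiE {..<m} (\<lambda>_. R1))"
proof
  show "Alls m \<subseteq> mw m ` (PiE {..<m} (\<lambda>_. R1))"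
  proof
    fix M assume "M \<in> Alls m"
    then obtain w where w: "w \<in> words m" "M = mw m w" by (auto simp: Alls_def)
    have "restrict w {..<m} \<in> PiE {..<m} (\<lambda>_. R1)" using w by (auto simp: words_def)
    then show "M \<in> mw m ` (PiE {..<m} (\<lambda>_. R1))" using w mw_restrict by (metis image_eqI)
  qed
  show "mw m ` (PiE {..<m} (\<lambda>_. R1)) \<subseteq> Alls m"
  proof
    fix M assume "M \<in> mw m ` (PiE {..<m} (\<lambda>_. R1))"
    then obtain w where "w \<in> PiE {..<m} (\<lambda>_. R1)" "M = mw m w" by blast
    then have "w \<in> words m" "M = mw m w" by (auto simp: words_def PiE_iff)
    then show "M \<in> Alls m" by (simp add: Alls_def)
  qed
qed

lemma finite_Alls: "finite (Alls m)"
  unfolding Alls_PiE using fin by (intro finite_imageI finite_PiE) auto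

lemma card_Alls: "card (Alls m) \<le> card R1 ^ m"
proof -
  have "card (Alls m) \<le> card (PiE {..<m} (\<lambda>_. R1))"
    unfolding Alls_PiE using fin by (intro card_image_le finite_PiE) auto
  also have "\<dots> = card R1 ^ m" by (simp add: card_PiE)
  finally show ?thesis .
qed

lemma finite_Gs: "finite (Gs m)" unfolding Gs_def using finite_Alls by (rule finite_subset[rotated]) blast

lemma closed_mw: "closed (mw m w)" if "w \<in> words m"
proof -
  have eq: "mw m w = (\<Inter>i\<in>{..<m}. P i -` w i)" unfolding mw_def by blast
  moreover have "\<forall>i\<in>{..<m}. closed (P i -` w i)"
  proof
    fix i assume "i \<in> {..<m}"
    then have "w i \<in> R1" using \<open>w \<in> words m\<close> by (simp add: words_def)
    then show "closed (P i -` w i)" by (intro closed_Pv closedR)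
  qed
  then show ?thesis unfolding eq by (rule closed_INT)
qed

lemma Alls_cover: "\<exists>M\<in>Alls m. x \<in> M"
proof -
  define w where "w i = (SOME R. R \<in> R1 \<and> P i x \<in> R)" for i
  have "w i \<in> R1 \<and> P i x \<in> w i" for i
  proof -
    have "P i x \<in> \<Union>R1" using cover by simp
    then have "\<exists>R. R \<in> R1 \<and> P i x \<in> R" by blast
    then show ?thesis unfolding w_def by (rule someI_ex)
  qed
  then have "w \<in> words m" "x \<in> mw m w" by (auto simp: words_def mw_def)
  then show ?thesis unfolding Alls_def by blast
qed

lemma interior_Union_empty:
  assumes "finite F" "\<forall>A\<in>F. closed A \<and> interior A = {}" shows "interior (\<Union>F) = {}"
  using assms
proof (induction F rule: finite_induct)
  case (insert A F)
  have cA: "closed A" "interior A = {}" using insert.prems by auto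
  have "interior (\<Union>F) = {}" using insert.IH insert.prems by blast
  then have "interior (A \<union> \<Union>F) = interior A" using interior_closed_Un_empty_interior[OF cA(1)] by blast
  then show ?case using cA by simp
qed simp

lemma Gs_cover: "\<exists>M\<in>Gs m. x \<in> M"
proof (rule ccontr)
  assume "\<not> ?thesis"
  then have xn: "x \<notin> \<Union>(Gs m)" by auto
  have cM: "closed M" if hM: "M \<in> Alls m" for M
  proof -
    obtain w where "w \<in> words m" "M = mw m w" using hM unfolding Alls_def by blast
    then show ?thesis using closed_mw by simp
  qed
  have cG: "closed (\<Union>(Gs m))"
    using finite_Gs by (rule closed_Union) (use cM in \<open>simp add: Gs_def\<close>)
  have "UNIV \<subseteq> \<Union>(Gs m) \<union> \<Union>(Alls m - Gs m)"
  proof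
    fix y :: 'a
    obtain M where M: "M \<in> Alls m" "y \<in> M" using Alls_cover by blast
    show "y \<in> \<Union>(Gs m) \<union> \<Union>(Alls m - Gs m)"
    proof (cases "M \<in> Gs m")
      case True then show ?thesis using M by blast
    next
      case False then show ?thesis using M by blast
    qed
  qed
  then have "- \<Union>(Gs m) \<subseteq> \<Union>(Alls m - Gs m)" by auto
  moreover have "open (- \<Union>(Gs m))" using cG by auto
  ultimately have "- \<Union>(Gs m) \<subseteq> interior (\<Union>(Alls m - Gs m))" by (simp add: interior_maximal)
  also have "interior (\<Union>(Alls m - Gs m)) = {}"
    using finite_Alls cM by (intro interior_Union_empty) (auto simp: Gs_def)
  finally show False using xn by auto
qed

lemma Gs_nonempty: "Gs m \<noteq> {}" using Gs_cover by blast

lemma card_Gs_pos: "card (Gs m) \<ge> 1"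
  using Gs_nonempty finite_Gs by (simp add: Suc_le_eq card_gt_0_iff)

lemma card_Gs_le: "card (Gs m) \<le> card R1 ^ m"
proof -
  have "card (Gs m) \<le> card (Alls m)" by (rule card_mono[OF finite_Alls]) (auto simp: Gs_def)
  then show ?thesis using card_Alls[of m] by linarith
qed

lemma interior_image_P: "interior M \<noteq> {} \<Longrightarrow> interior (P i ` M) \<noteq> {}"
proof -
  assume "interior M \<noteq> {}"
  then obtain x where x: "x \<in> interior M" by blast
  have "P i ` interior M \<subseteq> interior (P i ` M)"
    by (intro interior_maximal open_P image_mono interior_subset) simp
  then show ?thesis using x by blast
qed

lemma interior_image_Q: "interior M \<noteq> {} \<Longrightarrow> interior (Q i ` M) \<noteq> {}"
proof -
  assume "interior M \<noteq> {}"
  then obtain x where x: "x \<in> interior M" by blast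
  have "Q i ` interior M \<subseteq> interior (Q i ` M)"
    by (intro interior_maximal open_Q image_mono interior_subset) simp
  then show ?thesis using x by blast
qed

lemma int_mw_P: assumes "x \<in> interior (mw m w)" "i < m" shows "P i x \<in> interior (w i)"
proof -
  have "P i ` interior (mw m w) \<subseteq> w i"
  proof
    fix y assume "y \<in> P i ` interior (mw m w)"
    then obtain z where z: "z \<in> interior (mw m w)" "y = P i z" by blast
    then have "z \<in> mw m w" using interior_subset by blast
    then show "y \<in> w i" using z assms(2) by (simp add: mw_def)
  qed
  then have "P i ` interior (mw m w) \<subseteq> interior (w i)" by (intro interior_maximal open_P) auto
  then show ?thesis using assms(1) by blast
qed

lemma mw_word_unique:
  assumes "w \<in> words m" "w' \<in> words m" "interior (mw m w) \<noteq> {}" "mw m w = mw m w'" "i < m"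
  shows "w i = w' i"
proof -
  obtain x where x: "x \<in> interior (mw m w)" using assms(3) by blast
  have x': "x \<in> interior (mw m w')" using x assms(4) by simp
  have "P i x \<in> interior (w i)" "P i x \<in> interior (w' i)"
    using int_mw_P[OF x assms(5)] int_mw_P[OF x' assms(5)] by auto
  moreover have "w i \<in> R1" "w' i \<in> R1" using assms(1,2,5) by (auto simp: words_def)
  ultimately show ?thesis using disj[of "w i" "w' i"] by blast
qed


lemma splice:
  assumes ww: "w \<in> words m" "w' \<in> words m" and m: "0 < m" and e0: "w 0 = w' 0"
    and el: "w (m - 1) = w' (m - 1)"
    and a: "a \<in> interior (mw m w)" and b: "b \<in> interior (mw m w')"
    and d: "\<forall>i<m. dist (P i a) (P i b) \<le> e2"
  shows "\<forall>i<m. P i (br a b) \<in> w i \<inter> w' i"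
proof -
  have orb: "P i (br a b) = br (P i a) (P i b)" if "i < m" for i
    using d that by (intro br_orbit) auto
  have wR: "w i \<in> R1" "w' i \<in> R1" if "i < m" for i using ww that by (auto simp: words_def)
  have aint: "P i a \<in> interior (w i)" if "i < m" for i using int_mw_P[OF a that] .
  have bint: "P i b \<in> interior (w' i)" if "i < m" for i using int_mw_P[OF b that] .
  have ain: "P i a \<in> w i" if "i < m" for i using aint[OF that] interior_subset by blast
  have bin: "P i b \<in> w' i" if "i < m" for i using bint[OF that] interior_subset by blast
  have phi_br: "phi (br (P i a) (P i b)) = br (P (Suc i) a) (P (Suc i) b)" if "Suc i < m" for i
  proof -
    have "dist (P i a) (P i b) \<le> eX" "dist (phi (P i a)) (phi (P i b)) \<le> eX"
      using d[rule_format, of i] d[rule_format, of "Suc i"] that e2_le by auto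
    from ax_eq[OF this] show ?thesis by simp
  qed
  have fwd: "i < m \<longrightarrow> br (P i a) (P i b) \<in> XsR br e1 (P i a) (w i)" for i
  proof (induction i)
    case 0
    have dab: "dist a b \<le> e2" using d m by force
    have "b \<in> w 0" using bin[OF m] e0 by simp
    then have "br a b \<in> w 0" using rect_br[OF wR(1)[OF m] ain[OF m]] by simp
    moreover have "dist a (br a b) < 2 * e1" using e2d[OF dab] e1 by (simp add: dist_commute)
    moreover have "br a (br a b) = br a b" using br_in_Xs(3)[OF dab] .
    ultimately show ?case by (simp add: XsR_def Xs_def)
  next
    case (Suc i)
    show ?case
    proof
      assume si: "Suc i < m"
      then have IH: "br (P i a) (P i b) \<in> XsR br e1 (P i a) (w i)" using Suc.IH by simp
      have "phi ` XsR br e1 (P i a) (w i) \<subseteq> XsR br e1 (phi (P i a)) (w (Suc i))"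
        using si aint[of i] aint[of "Suc i"] wR(1)[of i] wR(1)[of "Suc i"]
        by (intro markov_s) auto
      then have "phi (br (P i a) (P i b)) \<in> XsR br e1 (phi (P i a)) (w (Suc i))" using IH by blast
      then show "br (P (Suc i) a) (P (Suc i) b) \<in> XsR br e1 (P (Suc i) a) (w (Suc i))"
        using phi_br[OF si] by simp
    qed
  qed
  have bwd: "d < m \<longrightarrow> br (P (m - 1 - d) a) (P (m - 1 - d) b) \<in> XuR br e1 (P (m - 1 - d) b) (w' (m - 1 - d))" for d
  proof (induction d)
    case 0
    have ml: "m - 1 < m" using m by simp
    have dab: "dist (P (m - 1) a) (P (m - 1) b) \<le> e2" using d ml by blast
    have "br (P (m - 1) a) (P (m - 1) b) \<in> w' (m - 1)" using fwd[of "m - 1"] ml el by (simp add: XsR_def)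
    moreover have "dist (P (m - 1) b) (br (P (m - 1) a) (P (m - 1) b)) < 2 * e1"
      using e2d[OF dab] e1 by (simp add: dist_commute)
    moreover have "br (br (P (m - 1) a) (P (m - 1) b)) (P (m - 1) b) = br (P (m - 1) a) (P (m - 1) b)"
      using br_in_Xs(4)[OF dab] .
    ultimately show ?case by (simp add: XuR_def Xu_def)
  next
    case (Suc dd)
    show ?case
    proof
      assume sd: "Suc dd < m"
      define j where "j = m - 1 - Suc dd"
      have jj: "m - 1 - dd = Suc j" "Suc j < m" "j < m" using sd j_def by auto
      have IH: "br (P (Suc j) a) (P (Suc j) b) \<in> XuR br e1 (P (Suc j) b) (w' (Suc j))"
        using Suc.IH sd jj by simp
      have "XuR br e1 (phi (P j b)) (w' (Suc j)) \<subseteq> phi ` XuR br e1 (P j b) (w' j)"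
        using jj bint[of j] bint[of "Suc j"] wR(2)[of j] wR(2)[of "Suc j"]
        by (intro markov_u) auto
      moreover have "phi (P j b) = P (Suc j) b" by simp
      ultimately have "XuR br e1 (P (Suc j) b) (w' (Suc j)) \<subseteq> phi ` XuR br e1 (P j b) (w' j)"
        by metis
      then have "br (P (Suc j) a) (P (Suc j) b) \<in> phi ` XuR br e1 (P j b) (w' j)"
        using IH by blast
      then obtain y where y: "y \<in> XuR br e1 (P j b) (w' j)" "br (P (Suc j) a) (P (Suc j) b) = phi y"
        by blast
      have "phi y = phi (br (P j a) (P j b))" using y(2) phi_br[OF jj(2)] by simp
      then have "y = br (P j a) (P j b)" using bij by (simp add: bij_is_inj inj_eq)
      then show "br (P (m - 1 - Suc dd) a) (P (m - 1 - Suc dd) b) \<in> XuR br e1 (P (m - 1 - Suc dd) b) (w' (m - 1 - Suc dd))"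
        using y(1) j_def by simp
    qed
  qed
  show ?thesis
  proof (intro allI impI)
    fix i assume i: "i < m"
    have "br (P i a) (P i b) \<in> w i" using fwd[of i] i by (simp add: XsR_def)
    moreover have "br (P i a) (P i b) \<in> w' i"
    proof -
      have "m - 1 - (m - 1 - i) = i" "m - 1 - i < m" using i by auto
      then show ?thesis using bwd[of "m - 1 - i"] by (simp add: XuR_def)
    qed
    ultimately show "P i (br a b) \<in> w i \<inter> w' i" using orb[OF i] by simp
  qed
qed


lemma cont_Pfst: "continuous_on UNIV (\<lambda>q::'a \<times> 'a. P i (fst q))"
  by (rule continuous_on_compose2[OF contP[of i] continuous_on_fst[OF continuous_on_id]]) simp
lemma cont_Psnd: "continuous_on UNIV (\<lambda>q::'a \<times> 'a. P i (snd q))"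
  by (rule continuous_on_compose2[OF contP[of i] continuous_on_snd[OF continuous_on_id]]) simp

lemma isCont_br: assumes "dist p q < eX" shows "isCont (\<lambda>r. br (fst r) (snd r)) (p, q)"
proof -
  have "open {r::'a \<times> 'a. dist (fst r) (snd r) < eX}"
    by (rule open_Collect_less) (intro continuous_on_dist continuous_on_fst continuous_on_snd continuous_on_id continuous_on_const)+
  moreover have "{r::'a \<times> 'a. dist (fst r) (snd r) < eX} \<subseteq> {r. dist (fst r) (snd r) \<le> eX}" by auto
  ultimately have "{r::'a \<times> 'a. dist (fst r) (snd r) < eX} \<subseteq> interior {r. dist (fst r) (snd r) \<le> eX}"
    by (simp add: interior_maximal)
  then have "(p, q) \<in> interior {r. dist (fst r) (snd r) \<le> eX}" using assms by auto
  then show ?thesis by (rule continuous_on_interior[OF br_cont])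
qed

lemma isCont_br1: assumes "dist p q < eX" shows "isCont (\<lambda>r. br r q) p"
proof -
  have h: "isCont (\<lambda>r. (r, q)) p" by simp
  show ?thesis using isCont_o2[OF h isCont_br[OF assms]] by simp
qed

lemma isCont_br2: assumes "dist p q < eX" shows "isCont (\<lambda>r. br p r) q"
proof -
  have h: "isCont (\<lambda>r. (p, r)) q" by simp
  show ?thesis using isCont_o2[OF h isCont_br[OF assms]] by simp
qed

lemma crux:
  assumes ww: "w \<in> words m" "w' \<in> words m" and m: "0 < m" and e0: "w 0 = w' 0"
    and el: "w (m - 1) = w' (m - 1)"
    and x: "x \<in> interior (mw m w)" and x': "x' \<in> interior (mw m w')"
    and d: "\<forall>i<m. dist (P i x) (P i x') < e2"
  shows "\<forall>i<m. w i = w' i"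
proof -
  define Op where "Op = {q::'a \<times> 'a. fst q \<in> interior (mw m w) \<and> snd q \<in> interior (mw m w') \<and>
     (\<forall>i<m. dist (P i (fst q)) (P i (snd q)) < e2)}"
  have O_eq: "Op = (interior (mw m w) \<times> interior (mw m w')) \<inter>
      (\<Inter>i\<in>{..<m}. {q. dist (P i (fst q)) (P i (snd q)) < e2})"
    unfolding Op_def by auto
  have "open {q::'a \<times> 'a. dist (P i (fst q)) (P i (snd q)) < e2}" for i
    by (rule open_Collect_less) (intro continuous_on_dist cont_Pfst cont_Psnd continuous_on_const)+
  then have oO: "open Op" unfolding O_eq by (intro open_Int open_Times open_INT) auto
  define z0 where "z0 = br x x'"
  have dxx: "dist x x' \<le> e2" using d m by force
  have z0x: "dist z0 x \<le> e1 / 4" "dist z0 x' \<le> e1 / 4" using e2d[OF dxx] z0_def by auto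
  have gz0: "br z0 x = x" "br x' z0 = x'"
  proof -
    have "br (br x x') x = br x x" using ax2[of x x' x] dxx z0x e2_le e1 unfolding z0_def by auto
    then show "br z0 x = x" unfolding z0_def by simp
    have "br x' (br x x') = br x' x'"
      using ax1[of x x' x'] dxx z0x e2_le e1 unfolding z0_def by (auto simp: dist_commute)
    then show "br x' z0 = x'" unfolding z0_def by simp
  qed
  have c1: "isCont (\<lambda>p. br p x) z0" using z0x e1 by (intro isCont_br1) auto
  have c2: "isCont (\<lambda>p. br x' p) z0" using z0x e1 by (intro isCont_br2) (auto simp: dist_commute)
  have cg: "isCont (\<lambda>p. (br p x, br x' p)) z0" using c1 c2 by simp
  have "(x, x') \<in> Op" using x x' d by (simp add: Op_def)
  then have "(br z0 x, br x' z0) \<in> Op" using gz0 by simp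
  then have "eventually (\<lambda>p. (br p x, br x' p) \<in> Op) (at z0)"
    using cg oO unfolding isCont_def tendsto_def by blast
  then obtain \<rho> where rho: "\<rho> > 0" "\<forall>p. p \<noteq> z0 \<and> dist p z0 < \<rho> \<longrightarrow> (br p x, br x' p) \<in> Op"
    unfolding eventually_at by auto
  define r where "r = min \<rho> (e1 / 4)"
  have r: "r > 0" using rho e1 r_def by auto
  define E where "E = {p. \<forall>i<m. P i p \<in> w i \<inter> w' i}"
  have ballE: "ball z0 r \<subseteq> E"
  proof
    fix p assume "p \<in> ball z0 r"
    then have dp: "dist p z0 < \<rho>" "dist p z0 < e1 / 4" using r_def by (auto simp: dist_commute)
    have gO: "(br p x, br x' p) \<in> Op"
      using rho(2) dp \<open>(br z0 x, br x' z0) \<in> Op\<close> by (cases "p = z0") auto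
    have t1: "dist p x \<le> dist p z0 + dist z0 x" "dist x' p \<le> dist x' z0 + dist z0 p"
      by (rule dist_triangle)+
    have "dist z0 p = dist p z0" "dist x' z0 = dist z0 x'" by (simp_all add: dist_commute)
    then have px: "dist p x \<le> e1" "dist x' p \<le> e1" using t1 dp z0x e1 by linarith+
    have b1: "dist p (br p x) < eX / 2" "dist x' (br x' p) < eX / 2" "dist p (br x' p) < eX / 2"
      using e1d[OF px(1)] e1d[OF px(2)] by auto
    have "dist (br p x) (br x' p) < eX"
      using dist_triangle[of "br p x" "br x' p" p] b1 by (simp add: dist_commute)
    then have s1: "br (br p x) (br x' p) = br p (br x' p)"
      using ax2[of p x "br x' p"] px e2_le e1 b1 by auto
    have s2: "br p (br x' p) = p"
      using ax1[of x' p p] px e2_le e1 b1 eX by (auto simp: dist_commute)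
    have "\<forall>i<m. P i (br (br p x) (br x' p)) \<in> w i \<inter> w' i"
      using gO unfolding Op_def
      by (intro splice[OF ww m e0 el]) auto
    then show "p \<in> E" using s1 s2 by (simp add: E_def)
  qed
  have "z0 \<in> interior E" using ballE r by (meson centre_in_ball interior_maximal open_ball subsetD)
  then have neE: "interior E \<noteq> {}" by blast
  show ?thesis
  proof (intro allI impI)
    fix i assume i: "i < m"
    have "P i ` interior E \<subseteq> w i \<inter> w' i"
    proof
      fix y assume "y \<in> P i ` interior E"
      then obtain p where "p \<in> interior E" "y = P i p" by blast
      then show "y \<in> w i \<inter> w' i" using interior_subset[of E] i by (auto simp: E_def)
    qed
    then have "P i ` interior E \<subseteq> interior (w i \<inter> w' i)" by (intro interior_maximal open_P) auto
    then have "interior (w i \<inter> w' i) \<noteq> {}" using neE by blast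
    moreover have "w i \<in> R1" "w' i \<in> R1" using ww i by (auto simp: words_def)
    ultimately show "w i = w' i" using int_disj by blast
  qed
qed


lemma mw_eq: "(\<forall>i<m. w i = w' i) \<Longrightarrow> mw m w = mw m w'"
  by (simp add: mw_def)

lemma Gs_word: assumes "M \<in> Gs m" obtains w where "w \<in> words m" "M = mw m w" "interior M \<noteq> {}"
  using assms unfolding Gs_def Alls_def by blast

lemma sep_bound:
  assumes "e > 0"
  shows "\<exists>k. \<forall>m S. finite S \<and> separated_set phi m e S \<longrightarrow> card S \<le> card (Gs (m + 2 * k))"
proof -
  obtain k where k: "\<forall>x y m. (\<forall>j < m + 2 * k. dist (P j x) (P j y) \<le> e2) \<longrightarrow>
      (\<forall>j < m. dist (P (j + k) x) (P (j + k) y) \<le> e)" using shadow[OF assms] by blast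
  show ?thesis
  proof (intro exI allI impI, elim conjE)
    fix m S assume fS: "finite S" and sS: "separated_set phi m e S"
    define n where "n = m + 2 * k"
    define f where "f y = (SOME M. M \<in> Gs n \<and> Q k y \<in> M)" for y
    have f: "f y \<in> Gs n \<and> Q k y \<in> f y" for y
    proof -
      obtain M where "M \<in> Gs n" "Q k y \<in> M" using Gs_cover by blast
      then have "\<exists>M. M \<in> Gs n \<and> Q k y \<in> M" by blast
      then show ?thesis unfolding f_def by (rule someI_ex[of "\<lambda>M. M \<in> Gs n \<and> Q k y \<in> M"])
    qed
    have "inj_on f S"
    proof (rule inj_onI, rule ccontr)
      fix s1 s2 assume s: "s1 \<in> S" "s2 \<in> S" "f s1 = f s2" "s1 \<noteq> s2"
      have fs1: "f s1 \<in> Gs n" using f[of s1] by blast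
      obtain w where w: "w \<in> words n" "f s1 = mw n w" by (rule Gs_word[OF fs1])
      have in1: "Q k s1 \<in> mw n w" using f[of s1] w by simp
      have in2: "Q k s2 \<in> mw n w" using f[of s2] w s by simp
      have "\<forall>j < m + 2 * k. dist (P j (Q k s1)) (P j (Q k s2)) \<le> e2"
      proof (intro allI impI)
        fix j assume "j < m + 2 * k"
        then have "j < n" using n_def by simp
        then have "w j \<in> R1" "P j (Q k s1) \<in> w j" "P j (Q k s2) \<in> w j"
          using in1 in2 w(1) by (auto simp: mw_def words_def)
        then show "dist (P j (Q k s1)) (P j (Q k s2)) \<le> e2" by (rule distR)
      qed
      then have "\<forall>j < m. dist (P (j + k) (Q k s1)) (P (j + k) (Q k s2)) \<le> e" using k by blast
      moreover have "P (j + k) (Q k s) = P j s" for j s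
        by (metis P_add PQ)
      ultimately have "\<forall>j < m. dist (P j s1) (P j s2) \<le> e" by simp
      moreover obtain i where "i < m" "dist ((phi ^^ i) s1) ((phi ^^ i) s2) > e"
        using sS s unfolding separated_set_def by blast
      ultimately show False by (meson not_le)
    qed
    moreover have "f ` S \<subseteq> Gs n" using f by blast
    ultimately show "card S \<le> card (Gs (m + 2 * k))"
      using card_inj_on_le[OF _ _ finite_Gs] n_def by blast
  qed
qed

lemma ms_props:
  assumes "e > 0"
  shows "\<exists>S. finite S \<and> separated_set phi m e S \<and> card S = max_separated phi m e"
    "\<And>S. finite S \<Longrightarrow> separated_set phi m e S \<Longrightarrow> card S \<le> max_separated phi m e"
    "max_separated phi m e \<ge> 1"
proof -
  define C where "C = {card S |S. finite S \<and> separated_set phi m e S}"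
  obtain k where k: "\<forall>m S. finite S \<and> separated_set phi m e S \<longrightarrow> card S \<le> card (Gs (m + 2 * k))"
    using sep_bound[OF assms] by blast
  have "C \<subseteq> {..card (Gs (m + 2 * k))}" using k unfolding C_def by auto
  then have fC: "finite C" by (rule finite_subset) simp
  obtain x :: 'a where True by simp
  have sx: "finite {x} \<and> separated_set phi m e {x}" by (simp add: separated_set_def)
  then have c1: "1 \<in> C" unfolding C_def by force
  then have neC: "C \<noteq> {}" by blast
  have ms: "max_separated phi m e = Max C"
    unfolding max_separated_def C_def[symmetric] using fC neC by (rule cSup_eq_Max)
  have "Max C \<in> C" using fC neC by (rule Max_in)
  then show "\<exists>S. finite S \<and> separated_set phi m e S \<and> card S = max_separated phi m e"
    unfolding ms C_def by auto
  show "\<And>S. finite S \<Longrightarrow> separated_set phi m e S \<Longrightarrow> card S \<le> max_separated phi m e"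
    unfolding ms using fC by (intro Max_ge) (auto simp: C_def)
  show "max_separated phi m e \<ge> 1" unfolding ms using fC c1 by (rule Max_ge)
qed

lemma upper_count:
  assumes m: "0 < m"
  shows "card (Gs m) \<le> max_separated phi m (e2 / 3) * (card R1 * card R1)"
proof -
  define \<delta> where "\<delta> = e2 / 3"
  have dp: "\<delta> > 0" using e2 \<delta>_def by simp
  obtain S where S: "finite S" "separated_set phi m \<delta> S" "card S = max_separated phi m \<delta>"
    using ms_props(1)[OF dp] by blast
  have span: "\<exists>y\<in>S. \<forall>i<m. dist (P i x) (P i y) \<le> \<delta>" for x
  proof (rule ccontr)
    assume nx: "\<not> ?thesis"
    then have xS: "x \<notin> S" by (metis dist_self dp less_le)
    have "separated_set phi m \<delta> (insert x S)"
      unfolding separated_set_def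
    proof (intro ballI impI)
      fix a b assume a: "a \<in> insert x S" and b: "b \<in> insert x S" and ab: "a \<noteq> b"
      show "\<exists>i<m. \<delta> < dist ((phi ^^ i) a) ((phi ^^ i) b)"
      proof (cases "a = x")
        case True
        then have "b \<in> S" using b ab by auto
        then show ?thesis using nx True by (auto simp: not_le)
      next
        case False
        note aF = False
        show ?thesis
        proof (cases "b = x")
          case True
          then have "a \<in> S" using a aF by auto
          then show ?thesis using nx True by (auto simp: not_le dist_commute)
        next
          case False
          then show ?thesis using S(2) a b ab aF unfolding separated_set_def by auto
        qed
      qed
    qed
    then have "card (insert x S) \<le> max_separated phi m \<delta>" using ms_props(2)[OF dp] S(1) by simp
    then show False using S xS by simp
  qed
  define wM where "wM (M::'a set) = (SOME w. w \<in> words m \<and> M = mw m w)" for M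
  define xM where "xM (M::'a set) = (SOME x. x \<in> interior M)" for M
  define yM where "yM (M::'a set) = (SOME y. y \<in> S \<and> (\<forall>i<m. dist (P i (xM M)) (P i y) \<le> \<delta>))" for M
  have wM: "wM M \<in> words m \<and> M = mw m (wM M)" if hM: "M \<in> Gs m" for M
  proof -
    obtain w where "w \<in> words m" "M = mw m w" by (rule Gs_word[OF hM])
    then have "\<exists>w. w \<in> words m \<and> M = mw m w" by blast
    then show ?thesis unfolding wM_def by (rule someI_ex[of "\<lambda>w. w \<in> words m \<and> M = mw m w"])
  qed
  have xM: "xM M \<in> interior M" if hM: "M \<in> Gs m" for M
  proof -
    have "\<exists>x. x \<in> interior M" using hM by (auto simp: Gs_def)
    then show ?thesis unfolding xM_def by (rule someI_ex)
  qed
  have yM: "yM M \<in> S \<and> (\<forall>i<m. dist (P i (xM M)) (P i (yM M)) \<le> \<delta>)" for M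
    unfolding yM_def by (rule someI_ex[of "\<lambda>y. y \<in> S \<and> (\<forall>i<m. dist (P i (xM M)) (P i y) \<le> \<delta>)"]) (use span in blast)
  define F where "F M = (yM M, wM M 0, wM M (m - 1))" for M
  have "inj_on F (Gs m)"
  proof (rule inj_onI)
    fix M1 M2 assume M: "M1 \<in> Gs m" "M2 \<in> Gs m" "F M1 = F M2"
    have eqs: "yM M1 = yM M2" "wM M1 0 = wM M2 0" "wM M1 (m - 1) = wM M2 (m - 1)"
      using M(3) by (auto simp: F_def)
    have x1: "xM M1 \<in> interior (mw m (wM M1))" using xM[OF M(1)] wM[OF M(1)] by simp
    have x2: "xM M2 \<in> interior (mw m (wM M2))" using xM[OF M(2)] wM[OF M(2)] by simp
    have "\<forall>i<m. dist (P i (xM M1)) (P i (xM M2)) < e2"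
    proof (intro allI impI)
      fix i assume "i < m"
      then have "dist (P i (xM M1)) (P i (yM M1)) \<le> \<delta>" "dist (P i (xM M2)) (P i (yM M1)) \<le> \<delta>"
        using yM[of M1] yM[of M2] eqs by auto
      then show "dist (P i (xM M1)) (P i (xM M2)) < e2"
        using dist_triangle[of "P i (xM M1)" "P i (xM M2)" "P i (yM M1)"] \<delta>_def e2
        by (simp add: dist_commute)
    qed
    then have "\<forall>i<m. wM M1 i = wM M2 i"
      using crux[OF _ _ m eqs(2) eqs(3) x1 x2] wM[OF M(1)] wM[OF M(2)] by blast
    then have "mw m (wM M1) = mw m (wM M2)" by (rule mw_eq)
    then show "M1 = M2" using wM[OF M(1)] wM[OF M(2)] by simp
  qed
  moreover have "F ` Gs m \<subseteq> S \<times> R1 \<times> R1"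
  proof
    fix t assume "t \<in> F ` Gs m"
    then obtain M where M: "M \<in> Gs m" "t = F M" by blast
    have "wM M 0 \<in> R1" "wM M (m - 1) \<in> R1" using wM[OF M(1)] m by (auto simp: words_def)
    then show "t \<in> S \<times> R1 \<times> R1" using M yM[of M] by (simp add: F_def)
  qed
  moreover have "finite (S \<times> R1 \<times> R1)" using S(1) fin by simp
  ultimately have "card (Gs m) \<le> card (S \<times> R1 \<times> R1)" by (rule card_inj_on_le)
  also have "\<dots> = card S * (card R1 * card R1)" by (simp add: card_cartesian_product)
  finally show ?thesis using S(3) \<delta>_def by simp
qed


lemma R1_ne: "card R1 \<ge> 1"
proof -
  obtain x :: 'a where True by simp
  have "x \<in> \<Union>R1" using cover by simp
  then have "R1 \<noteq> {}" by blast
  then show ?thesis using fin by (simp add: Suc_le_eq card_gt_0_iff)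
qed

lemma submult: "card (Gs (a + b)) \<le> card (Gs a) * card (Gs b)"
proof -
  define wM where "wM (M::'a set) = (SOME w. w \<in> words (a + b) \<and> M = mw (a + b) w)" for M
  have wM: "wM M \<in> words (a + b) \<and> M = mw (a + b) (wM M)" if hM: "M \<in> Gs (a + b)" for M
  proof -
    obtain w where "w \<in> words (a + b)" "M = mw (a + b) w" by (rule Gs_word[OF hM])
    then have "\<exists>w. w \<in> words (a + b) \<and> M = mw (a + b) w" by blast
    then show ?thesis unfolding wM_def by (rule someI_ex[of "\<lambda>w. w \<in> words (a + b) \<and> M = mw (a + b) w"])
  qed
  define F where "F M = (mw a (wM M), mw b (\<lambda>i. wM M (a + i)))" for M
  have split: "mw (a + b) w = mw a w \<inter> P a -` mw b (\<lambda>i. w (a + i))" for w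
  proof
    show "mw (a + b) w \<subseteq> mw a w \<inter> P a -` mw b (\<lambda>i. w (a + i))"
    proof
      fix x assume "x \<in> mw (a + b) w"
      then have h: "\<forall>i<a + b. P i x \<in> w i" by (simp add: mw_def)
      have "\<forall>i<b. P i (P a x) \<in> w (a + i)"
      proof (intro allI impI)
        fix i assume "i < b"
        then have "P (i + a) x \<in> w (i + a)" using h by simp
        then show "P i (P a x) \<in> w (a + i)" by (simp add: P_add add.commute)
      qed
      then show "x \<in> mw a w \<inter> P a -` mw b (\<lambda>i. w (a + i))" using h by (simp add: mw_def)
    qed
    show "mw a w \<inter> P a -` mw b (\<lambda>i. w (a + i)) \<subseteq> mw (a + b) w"
    proof
      fix x assume x: "x \<in> mw a w \<inter> P a -` mw b (\<lambda>i. w (a + i))"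
      have "P i x \<in> w i" if i: "i < a + b" for i
      proof (cases "i < a")
        case True then show ?thesis using x by (simp add: mw_def)
      next
        case False
        then obtain t where t: "i = a + t" "t < b" using i by (metis add_diff_inverse_nat add_less_cancel_left)
        have "P t (P a x) \<in> w (a + t)" using x t by (simp add: mw_def)
        then show ?thesis using t by (simp add: P_add add.commute)
      qed
      then show "x \<in> mw (a + b) w" by (simp add: mw_def)
    qed
  qed
  have "inj_on F (Gs (a + b))"
  proof (rule inj_onI)
    fix M1 M2 assume M: "M1 \<in> Gs (a + b)" "M2 \<in> Gs (a + b)" "F M1 = F M2"
    have "M1 = mw a (wM M1) \<inter> P a -` mw b (\<lambda>i. wM M1 (a + i))" using wM[OF M(1)] split by metis
    also have "\<dots> = mw a (wM M2) \<inter> P a -` mw b (\<lambda>i. wM M2 (a + i))" using M(3) by (simp add: F_def)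
    also have "\<dots> = M2" using wM[OF M(2)] split by metis
    finally show "M1 = M2" .
  qed
  moreover have "F ` Gs (a + b) \<subseteq> Gs a \<times> Gs b"
  proof
    fix t assume "t \<in> F ` Gs (a + b)"
    then obtain M where M: "M \<in> Gs (a + b)" "t = F M" by blast
    have w: "wM M \<in> words (a + b)" "M = mw (a + b) (wM M)" using wM[OF M(1)] by auto
    have iM: "interior M \<noteq> {}" using M(1) by (simp add: Gs_def)
    have w1: "wM M \<in> words a" using w(1) by (simp add: words_def)
    have w2: "(\<lambda>i. wM M (a + i)) \<in> words b" using w(1) by (simp add: words_def)
    have sub1: "M \<subseteq> mw a (wM M)" using w(2) split by blast
    have sub2: "P a ` M \<subseteq> mw b (\<lambda>i. wM M (a + i))" using w(2) split by blast
    have "interior (mw a (wM M)) \<noteq> {}" using iM interior_mono[OF sub1] by blast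
    then have g1: "mw a (wM M) \<in> Gs a" using w1 by (auto simp: Gs_def Alls_def)
    have "interior (mw b (\<lambda>i. wM M (a + i))) \<noteq> {}"
      using interior_image_P[OF iM, of a] interior_mono[OF sub2] by blast
    then have g2: "mw b (\<lambda>i. wM M (a + i)) \<in> Gs b" using w2 by (auto simp: Gs_def Alls_def)
    show "t \<in> Gs a \<times> Gs b" using g1 g2 M(2) by (simp add: F_def)
  qed
  moreover have "finite (Gs a \<times> Gs b)" using finite_Gs by simp
  ultimately have "card (Gs (a + b)) \<le> card (Gs a \<times> Gs b)" by (rule card_inj_on_le)
  then show ?thesis by (simp add: card_cartesian_product)
qed

lemma pow_bound: "card (Gs (q * p + r)) \<le> card (Gs p) ^ q * card (Gs r)"
proof (induction q)
  case (Suc q)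
  have "card (Gs (Suc q * p + r)) = card (Gs (p + (q * p + r)))" by (simp add: add.assoc)
  also have "\<dots> \<le> card (Gs p) * card (Gs (q * p + r))" by (rule submult)
  also have "\<dots> \<le> card (Gs p) * (card (Gs p) ^ q * card (Gs r))" using Suc by simp
  finally show ?case by (simp add: mult.assoc)
qed simp


lemma zpow_img: "zpow phi (-i) ` A = {x. zpow phi i x \<in> A}"
proof (cases "i > 0")
  case True
  then have "zpow phi (-i) = Q (nat i)" "zpow phi i = P (nat i)" by (auto simp: zpow_def)
  then show ?thesis by (simp add: Q_image vimage_def)
next
  case False
  show ?thesis
  proof (cases "i = 0")
    case True then show ?thesis by (simp add: zpow_def)
  next
    case False
    then have "i < 0" using \<open>\<not> i > 0\<close> by simp
    then have "zpow phi (-i) = P (nat (-i))" "zpow phi i = Q (nat (-i))" by (auto simp: zpow_def)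
    then show ?thesis by (simp add: P_image vimage_def)
  qed
qed

lemma zpow_shift: assumes "- int k \<le> i" shows "zpow phi i (P k y) = P (nat (i + int k)) y"
proof (cases "0 \<le> i")
  case True
  then have "zpow phi i (P k y) = P (nat i) (P k y)" by (simp add: zpow_def)
  also have "\<dots> = P (nat i + k) y" by (simp add: P_add)
  also have "nat i + k = nat (i + int k)" using True by simp
  finally show ?thesis .
next
  case False
  define j where "j = nat (- i)"
  have jk: "j \<le> k" using assms False j_def by simp
  have pk: "P k y = P j (P (k - j) y)" using jk by (simp add: P_add)
  have "zpow phi i (P k y) = Q j (P k y)" using False j_def by (simp add: zpow_def)
  also have "\<dots> = P (k - j) y" unfolding pk by simp
  also have "k - j = nat (i + int k)" using False j_def jk by simp
  finally show ?thesis .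
qed

lemma gen_inter:
  "(\<Inter>i\<in>{- int k..int k}. zpow phi (-i) ` g i) = P k ` mw (2 * k + 1) (\<lambda>j. g (int j - int k))"
proof -
  have "x \<in> (\<Inter>i\<in>{- int k..int k}. zpow phi (-i) ` g i) \<longleftrightarrow>
        x \<in> P k ` mw (2 * k + 1) (\<lambda>j. g (int j - int k))" for x
  proof -
    define y where "y = Q k x"
    have xy: "x = P k y" using y_def by simp
    have L: "x \<in> (\<Inter>i\<in>{- int k..int k}. zpow phi (-i) ` g i) \<longleftrightarrow>
          (\<forall>i\<in>{- int k..int k}. P (nat (i + int k)) y \<in> g i)"
      unfolding zpow_img xy using zpow_shift by auto
    have R: "x \<in> P k ` mw (2 * k + 1) (\<lambda>j. g (int j - int k)) \<longleftrightarrow>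
          (\<forall>j<2 * k + 1. P j y \<in> g (int j - int k))"
      unfolding P_image y_def by (simp add: mw_def)
    have "(\<forall>i\<in>{- int k..int k}. P (nat (i + int k)) y \<in> g i) \<longleftrightarrow>
          (\<forall>j<2 * k + 1. P j y \<in> g (int j - int k))"
    proof
      assume h: "\<forall>i\<in>{- int k..int k}. P (nat (i + int k)) y \<in> g i"
      show "\<forall>j<2 * k + 1. P j y \<in> g (int j - int k)"
      proof (intro allI impI)
        fix j assume j: "j < 2 * k + 1"
        then have "int j - int k \<in> {- int k..int k}" by auto
        then have "P (nat (int j - int k + int k)) y \<in> g (int j - int k)" using h by blast
        then show "P j y \<in> g (int j - int k)" by simp
      qed
    next
      assume h: "\<forall>j<2 * k + 1. P j y \<in> g (int j - int k)"
      show "\<forall>i\<in>{- int k..int k}. P (nat (i + int k)) y \<in> g i"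
      proof
        fix i assume i: "i \<in> {- int k..int k}"
        then have "nat (i + int k) < 2 * k + 1" by auto
        then have "P (nat (i + int k)) y \<in> g (int (nat (i + int k)) - int k)" using h by blast
        moreover have "int (nat (i + int k)) - int k = i" using i by auto
        ultimately show "P (nat (i + int k)) y \<in> g i" by simp
      qed
    qed
    then show ?thesis using L R by simp
  qed
  then show ?thesis by blast
qed

lemma refined_eq:
  "refined_partition phi R1 (Suc k) = (\<lambda>M. P k ` M) ` Gs (2 * k + 1)"
proof -
  have I: "{1 - int (Suc k)..int (Suc k) - 1} = {- int k..int k}" by auto
  show ?thesis
  proof
    show "refined_partition phi R1 (Suc k) \<subseteq> (\<lambda>M. P k ` M) ` Gs (2 * k + 1)"
    proof
      fix R assume "R \<in> refined_partition phi R1 (Suc k)"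
      then obtain f where f: "\<forall>i\<in>{- int k..int k}. f i \<in> R1"
        "R = (\<Inter>i\<in>{- int k..int k}. zpow phi (- i) ` f i)" "interior R \<noteq> {}"
        unfolding refined_partition_def I by blast
      define w where "w j = f (int j - int k)" for j
      have wf: "w = (\<lambda>j. f (int j - int k))" using w_def by auto
      have R: "R = P k ` mw (2 * k + 1) w" using f(2) gen_inter[where k=k and g=f] wf by simp
      have ww: "w \<in> words (2 * k + 1)"
        unfolding words_def w_def using f(1) by auto
      have "Q k ` R = mw (2 * k + 1) w" unfolding R by (simp add: image_image)
      then have "interior (mw (2 * k + 1) w) \<noteq> {}" using interior_image_Q[OF f(3)] by metis
      then have "mw (2 * k + 1) w \<in> Gs (2 * k + 1)" using ww by (simp add: Gs_def Alls_def)
      then show "R \<in> (\<lambda>M. P k ` M) ` Gs (2 * k + 1)" using R by blast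
    qed
    show "(\<lambda>M. P k ` M) ` Gs (2 * k + 1) \<subseteq> refined_partition phi R1 (Suc k)"
    proof
      fix R assume "R \<in> (\<lambda>M. P k ` M) ` Gs (2 * k + 1)"
      then obtain M where M: "M \<in> Gs (2 * k + 1)" "R = P k ` M" by blast
      obtain w where w: "w \<in> words (2 * k + 1)" "M = mw (2 * k + 1) w" "interior M \<noteq> {}"
        by (rule Gs_word[OF M(1)])
      define f where "f i = w (nat (i + int k))" for i
      have fR: "\<forall>i\<in>{- int k..int k}. f i \<in> R1"
      proof
        fix i assume "i \<in> {- int k..int k}"
        then have "nat (i + int k) < 2 * k + 1" by auto
        then show "f i \<in> R1" using w(1) by (simp add: f_def words_def)
      qed
      have "(\<lambda>j. f (int j - int k)) = w" by (simp add: f_def)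
      then have "R = (\<Inter>i\<in>{- int k..int k}. zpow phi (- i) ` f i)"
        using gen_inter[where k=k and g=f] M(2) w(2) by simp
      moreover have "interior R \<noteq> {}" using M(2) interior_image_P[OF w(3)] by simp
      ultimately show "R \<in> refined_partition phi R1 (Suc k)"
        unfolding refined_partition_def I using fR by blast
    qed
  qed
qed

lemma card_refined: "card (refined_partition phi R1 (Suc k)) = card (Gs (2 * k + 1))"
proof -
  have "inj_on (\<lambda>M. P k ` M) (Gs (2 * k + 1))"
    by (rule inj_onI) (simp add: inj_image_eq_iff[OF injP])
  then show ?thesis unfolding refined_eq by (rule card_image)
qed


lemma Gs_pos: "real (card (Gs n)) \<ge> 1" using card_Gs_pos by simp

lemma ms_le_Gs:
  assumes "e > 0" "\<forall>m S. finite S \<and> separated_set phi m e S \<longrightarrow> card S \<le> card (Gs (m + 2 * k))"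
  shows "max_separated phi n e \<le> card (Gs (n + 2 * k))"
proof -
  obtain S where "finite S" "separated_set phi n e S" "card S = max_separated phi n e"
    using ms_props(1)[OF assms(1)] by blast
  then show ?thesis using assms(2) by metis
qed

lemma ln_ms_bound:
  assumes p: "1 \<le> p" and e: "e > 0"
  shows "\<exists>A. \<forall>n. ln (real (max_separated phi n e)) \<le> ln (real (card (Gs p))) / real p * real n + A"
proof -
  obtain k where k: "\<forall>m S. finite S \<and> separated_set phi m e S \<longrightarrow> card S \<le> card (Gs (m + 2 * k))"
    using sep_bound[OF e] by blast
  define c where "c = ln (real (card (Gs p))) / real p"
  define K where "K = real (card R1)"
  have K1: "K \<ge> 1" using R1_ne K_def by simp
  have c0: "c \<ge> 0" using Gs_pos[of p] p c_def by simp
  define A where "A = c * (2 * real k) + real p * ln K"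
  show ?thesis
  proof (intro exI allI)
    fix n
    define N where "N = n + 2 * k"
    define q where "q = N div p"
    define r where "r = N mod p"
    have Nqr: "N = q * p + r" using q_def r_def by simp
    have rp: "r \<le> p" using r_def p by (simp add: less_imp_le)
    have "card (Gs N) \<le> card (Gs p) ^ q * card (Gs r)" using pow_bound[of q p r] Nqr by simp
    also have "card (Gs r) \<le> card R1 ^ p"
      using card_Gs_le[of r] power_increasing[OF rp, of "card R1"] R1_ne by linarith
    then have "card (Gs p) ^ q * card (Gs r) \<le> card (Gs p) ^ q * card R1 ^ p" by simp
    finally have "card (Gs N) \<le> card (Gs p) ^ q * card R1 ^ p" .
    moreover have "max_separated phi n e \<le> card (Gs N)" using ms_le_Gs[OF e k] N_def by simp
    ultimately have "max_separated phi n e \<le> card (Gs p) ^ q * card R1 ^ p" by (rule le_trans[rotated])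
    then have "real (max_separated phi n e) \<le> real (card (Gs p) ^ q * card R1 ^ p)"
      by (simp only: of_nat_le_iff)
    then have "real (max_separated phi n e) \<le> real (card (Gs p)) ^ q * K ^ p"
      unfolding K_def by simp
    moreover have "real (max_separated phi n e) > 0" using ms_props(3)[OF e, of n] by simp
    ultimately have "ln (real (max_separated phi n e)) \<le> ln (real (card (Gs p)) ^ q * K ^ p)"
      by simp
    also have "\<dots> = real q * ln (real (card (Gs p))) + real p * ln K"
      using Gs_pos[of p] K1 by (simp add: ln_mult ln_realpow)
    also have "real q * ln (real (card (Gs p))) \<le> c * real N"
    proof -
      have "q * p \<le> N" using Nqr by simp
      then have "real (q * p) \<le> real N" by (simp only: of_nat_le_iff)
      then have "real q * real p \<le> real N" by simp
      then have "real q \<le> real N / real p" using p by (simp add: field_simps)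
      then have "real q * ln (real (card (Gs p))) \<le> real N / real p * ln (real (card (Gs p)))"
        using Gs_pos[of p] by (intro mult_right_mono) auto
      then show ?thesis by (simp add: c_def mult.commute)
    qed
    then have "real q * ln (real (card (Gs p))) + real p * ln K \<le> c * real N + real p * ln K" by simp
    also have "\<dots> = c * real n + A" by (simp add: N_def A_def algebra_simps)
    finally show "ln (real (max_separated phi n e)) \<le> ln (real (card (Gs p))) / real p * real n + A"
      by (simp add: c_def)
  qed
qed

lemma h_upper:
  assumes p: "1 \<le> p"
  shows "topological_entropy phi \<le> ereal (ln (real (card (Gs p))) / real p)"
  unfolding topological_entropy_def
proof (rule SUP_least)
  fix e :: real assume "e \<in> {0<..}"
  then have e: "e > 0" by simp
  define c where "c = ln (real (card (Gs p))) / real p"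
  obtain A where A: "\<forall>n. ln (real (max_separated phi n e)) \<le> c * real n + A"
    using ln_ms_bound[OF p e] c_def by blast
  have "ln (real (max_separated phi 0 e)) \<ge> 0" using ms_props(3)[OF e, of 0] by simp
  then have A0: "A \<ge> 0" using A[rule_format, of 0] by simp
  show "limsup (\<lambda>n. ereal (ln (real (max_separated phi n e)) / real n)) \<le> ereal c"
  proof (rule ereal_le_epsilon2)
    fix \<eta> :: real assume eta: "\<eta> > 0"
    have "eventually (\<lambda>n. ereal (ln (real (max_separated phi n e)) / real n) \<le> ereal (c + \<eta>)) sequentially"
    proof (rule eventually_sequentiallyI[of "nat \<lceil>A / \<eta>\<rceil> + 1"])
      fix n assume n: "nat \<lceil>A / \<eta>\<rceil> + 1 \<le> n"
      then have n0: "real n > 0" by simp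
      have "A / \<eta> < real n" using n by linarith
      then have An: "A \<le> \<eta> * real n" using eta by (simp add: field_simps)
      have "ln (real (max_separated phi n e)) \<le> (c + \<eta>) * real n"
        using A[rule_format, of n] An by (simp add: algebra_simps)
      then have "ln (real (max_separated phi n e)) / real n \<le> c + \<eta>"
        using n0 by (simp add: field_simps)
      then show "ereal (ln (real (max_separated phi n e)) / real n) \<le> ereal (c + \<eta>)" by simp
    qed
    then have "limsup (\<lambda>n. ereal (ln (real (max_separated phi n e)) / real n)) \<le> ereal (c + \<eta>)"
      by (rule Limsup_bounded)
    then show "limsup (\<lambda>n. ereal (ln (real (max_separated phi n e)) / real n)) \<le> ereal c + ereal \<eta>"
      by simp
  qed
qed

lemma h_ge_limsup:
  assumes "e > 0"
  shows "limsup (\<lambda>n. ereal (ln (real (max_separated phi n e)) / real n)) \<le> topological_entropy phi"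
  unfolding topological_entropy_def using assms by (intro SUP_upper) simp

lemma h_nonneg: "0 \<le> topological_entropy phi"
proof -
  have e: "(1::real) > 0" by simp
  have "eventually (\<lambda>n. 0 \<le> ereal (ln (real (max_separated phi n 1)) / real n)) sequentially"
    using ms_props(3)[OF e] by (intro always_eventually) simp
  then have "0 \<le> liminf (\<lambda>n. ereal (ln (real (max_separated phi n 1)) / real n))"
    by (rule Liminf_bounded)
  also have "\<dots> \<le> limsup (\<lambda>n. ereal (ln (real (max_separated phi n 1)) / real n))"
    by (rule Liminf_le_Limsup) simp
  also have "\<dots> \<le> topological_entropy phi" by (rule h_ge_limsup[OF e])
  finally show ?thesis .
qed


lemma main:
  "\<exists>C c. C > 0 \<and> c > 0 \<and>
    (\<forall>\<epsilon>. 0 < \<epsilon> \<and> \<epsilon> < 1 \<longrightarrow> (\<exists>n0::nat. \<forall>n\<ge>n0.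
       c * exp (2 * (real_of_ereal (topological_entropy phi) - \<epsilon>) * real n)
         < real (card (refined_partition phi R1 n)) \<and>
       real (card (refined_partition phi R1 n))
         < C * exp (2 * (real_of_ereal (topological_entropy phi) + \<epsilon>) * real n)))"
proof -
  have X: "\<exists>n0::nat. \<forall>n\<ge>n0.
       1 * exp (2 * (real_of_ereal (topological_entropy phi) - \<epsilon>) * real n)
         < real (card (refined_partition phi R1 n)) \<and>
       real (card (refined_partition phi R1 n))
         < 1 * exp (2 * (real_of_ereal (topological_entropy phi) + \<epsilon>) * real n)"
    if eps: "0 < \<epsilon> \<and> \<epsilon> < 1" for \<epsilon> :: real
  proof -
  define h where "h = topological_entropy phi"
  define H where "H = real_of_ereal h"
  have h0: "0 \<le> h" using h_nonneg h_def by simp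
  have h1: "h \<le> ereal (ln (real (card (Gs 1))))" using h_upper[of 1] h_def by simp
  have hH: "h = ereal H" unfolding H_def using h0 h1 by (cases h) auto
  have H0: "H \<ge> 0" using h0 hH by simp
  have Hle: "H \<le> ln (real (card (Gs p))) / real p" if "1 \<le> p" for p
    using h_upper[OF that] hH h_def by simp
  define \<delta> where "\<delta> = e2 / 3"
  have dp: "\<delta> > 0" using e2 \<delta>_def by simp
  have "limsup (\<lambda>n. ereal (ln (real (max_separated phi n \<delta>)) / real n)) < ereal (H + \<epsilon> / 2)"
    using h_ge_limsup[OF dp] hH h_def eps by (simp add: order.strict_trans1)
  then have "eventually (\<lambda>n. ereal (ln (real (max_separated phi n \<delta>)) / real n) < ereal (H + \<epsilon> / 2)) sequentially"
    by (rule Limsup_lessD)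
  then obtain N1 where N1: "\<forall>n\<ge>N1. ln (real (max_separated phi n \<delta>)) / real n < H + \<epsilon> / 2"
    unfolding eventually_sequentially by auto
  define K where "K = real (card R1)"
  have K1: "K \<ge> 1" using R1_ne K_def by simp
  define n0 where "n0 = N1 + 1 + nat \<lceil>2 * ln K / \<epsilon>\<rceil> + nat \<lceil>H / (2 * \<epsilon>)\<rceil>"
  show "\<exists>n0::nat. \<forall>n\<ge>n0.
       1 * exp (2 * (real_of_ereal (topological_entropy phi) - \<epsilon>) * real n)
         < real (card (refined_partition phi R1 n)) \<and>
       real (card (refined_partition phi R1 n))
         < 1 * exp (2 * (real_of_ereal (topological_entropy phi) + \<epsilon>) * real n)"
  proof (intro exI allI impI)
    fix n assume n: "n0 \<le> n"
    then obtain k where nk: "n = Suc k" using n0_def by (cases n) auto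
    define m where "m = 2 * k + 1"
    have card_eq: "card (refined_partition phi R1 n) = card (Gs m)" using card_refined nk m_def by simp
    define G where "G = real (card (Gs m))"
    have G1: "G \<ge> 1" using Gs_pos G_def by simp
    have mr: "real m = 2 * real n - 1" using nk m_def by simp
    have nN1: "N1 \<le> m" using n n0_def nk m_def by simp
    have nK: "2 * ln K / \<epsilon> < real n" using n n0_def by linarith
    have nH: "H / (2 * \<epsilon>) < real n" using n n0_def by linarith
    have m0: "real m > 0" using m_def by simp
    have "H \<le> ln G / real m" using Hle[of m] m_def G_def by simp
    then have Hm: "H * real m \<le> ln G" using m0 by (simp add: field_simps)
    have "H < 2 * \<epsilon> * real n" using nH eps by (simp add: field_simps)
    then have "2 * (H - \<epsilon>) * real n < H * real m" unfolding mr by (simp add: algebra_simps)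
    then have low: "2 * (H - \<epsilon>) * real n < ln G" using Hm by linarith
    define S where "S = real (max_separated phi m \<delta>)"
    have S1: "S \<ge> 1" using ms_props(3)[OF dp, of m] S_def by simp
    have "card (Gs m) \<le> max_separated phi m \<delta> * (card R1 * card R1)"
      using upper_count[of m] m_def unfolding \<delta>_def by simp
    then have "real (card (Gs m)) \<le> real (max_separated phi m \<delta> * (card R1 * card R1))"
      by (simp only: of_nat_le_iff)
    then have GS: "G \<le> S * (K * K)" by (simp add: G_def S_def K_def)
    have "ln G \<le> ln (S * (K * K))" using GS G1 by simp
    also have "\<dots> = ln S + 2 * ln K" using S1 K1 by (simp add: ln_mult)
    finally have lnG: "ln G \<le> ln S + 2 * ln K" .
    have "ln S / real m < H + \<epsilon> / 2" using N1 nN1 S_def by simp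
    then have lnS: "ln S < (H + \<epsilon> / 2) * real m" using m0 by (simp add: field_simps)
    have "(H + \<epsilon> / 2) * real m \<le> (H + \<epsilon> / 2) * (2 * real n)"
      using H0 eps mr by (intro mult_left_mono) auto
    moreover have "2 * ln K < \<epsilon> * real n" using nK eps by (simp add: field_simps)
    ultimately have up: "ln G < 2 * (H + \<epsilon>) * real n" using lnG lnS by (simp add: algebra_simps)
    have Gpos: "G > 0" using G1 by simp
    have "exp (2 * (H - \<epsilon>) * real n) < exp (ln G)" using low by simp
    then have A: "exp (2 * (H - \<epsilon>) * real n) < G" using Gpos by simp
    have "exp (ln G) < exp (2 * (H + \<epsilon>) * real n)" using up by simp
    then have B: "G < exp (2 * (H + \<epsilon>) * real n)" using Gpos by simp
    show "1 * exp (2 * (real_of_ereal (topological_entropy phi) - \<epsilon>) * real n)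
         < real (card (refined_partition phi R1 n)) \<and>
       real (card (refined_partition phi R1 n))
         < 1 * exp (2 * (real_of_ereal (topological_entropy phi) + \<epsilon>) * real n)"
      using A B card_eq unfolding G_def H_def h_def by simp
  qed
  qed
  show ?thesis
    by (rule exI[of _ 1], rule exI[of _ 1]) (use X in simp)
qed

end

theorem lemma5p13:
  fixes phi :: "'a::metric_space \<Rightarrow> 'a" and br :: "'a \<Rightarrow> 'a \<Rightarrow> 'a"
    and eX lamX e1 e2 :: real and R1 :: "'a set set"
  assumes "smale_space phi br eX lamX"
    and "irreducible_sys phi"
    and "eps1_ok br eX e1"
    and "eps2_ok phi br e1 e2"
    and "markov_partition phi br e1 R1"
    and "\<forall>R\<in>R1. diameter R \<le> e2"
  shows "\<exists>C c. C > 0 \<and> c > 0 \<and>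
    (\<forall>\<epsilon>. 0 < \<epsilon> \<and> \<epsilon> < 1 \<longrightarrow> (\<exists>n0::nat. \<forall>n\<ge>n0.
       c * exp (2 * (real_of_ereal (topological_entropy phi) - \<epsilon>) * real n)
         < real (card (refined_partition phi R1 n)) \<and>
       real (card (refined_partition phi R1 n))
         < C * exp (2 * (real_of_ereal (topological_entropy phi) + \<epsilon>) * real n)))"
proof -
  interpret SM phi br eX lamX e1 e2 R1
    using assms(1,3,4,5,6) by unfold_locales
  show ?thesis by (rule main)
qed

end
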